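(* Let $n\in\mathbb{N}$, $p_1,\ldots,p_n\in\mathbb{H}$ with $p_n\neq0$, $d_0\in\{0,1\}$, and $p(x)=p_nx^n+\cdots+p_1x+d_0$. For a real variable $t$, write $p(t)=g(t)\big(g_1(t)+g_2(t)\mathbf{j}\big)$ with $g,g_1,g_2\in\mathbb{C}[t]$ and $\gcd(g_1,g_2)=1$, and let $\tilde g(t)=g_1(t)\bar g_1(t)+g_2(t)\bar g_2(t)$, where $\bar h$ denotes the polynomial obtained from $h\in\mathbb{C}[t]$ by conjugating its coefficients. Write the set of distinct complex roots of $g$ as $$\{\xi_1,\ldots,\xi_s;\ \lambda_1,\overline{\lambda_1},\ldots,\lambda_t,\overline{\lambda_t};\ \eta_1,\ldots,\eta_{k_1}\},$$ where $\xi_1,\ldots,\xi_s$ are real, the $\lambda_i,\overline{\lambda_i}$ are the nonreal roots of $g$ whose conjugates are also roots of $g$, and $\eta_1,\ldots,\eta_{k_1}$ are the remaining (nonreal) roots of $g$. Write the set of distinct complex roots of $\tilde g$ as $\{\eta_{k_1+1},\overline{\eta_{k_1+1}},\ldots,\eta_k,\overline{\eta_k}\}$, where from this list one deletes each pair $\eta_i,\overline{\eta_i}$ for which $\eta_i$ or $\overline{\eta_i}$ is a root of $g$ (so that after deletion $\eta_1,\ldots,\eta_k,\overline{\eta_{k_1+1}},\ldots,\overline{\eta_k},\lambda_1,\overline{\lambda_1},\ldots,\lambda_t,\overline{\lambda_t}$ are distinct nonreal complex numbers). Then the set of zeros of $p(x)$ in $\mathbb{H}$ is $$\{\xi_1,\ldots,\xi_s;\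 \omega_1,\ldots,\omega_k\}\ \dot\cup\ \dot{\bigcup_{i=1}^{t}}[\lambda_i],$$ where $$\omega_i=\frac{1}{|g_1(\overline{\eta_i})|^2+|g_2(\overline{\eta_i})|^2}\Big\{|g_2(\overline{\eta_i})|^2\overline{\eta_i}+|g_1(\overline{\eta_i})|^2\eta_i+2g_2(\overline{\eta_i})\overline{g_1(\overline{\eta_i})}(\operatorname{Im}\eta_i)\mathbf{k}\Big\}.$$
   Context: $\mathbb{H}$ denotes the real quaternions with units $\mathbf{i},\mathbf{j},\mathbf{k}$ ($\mathbf{i}^2=\mathbf{j}^2=\mathbf{k}^2=-1$, $\mathbf{ij}=-\mathbf{ji}=\mathbf{k}$), and $\mathbb{C}=\mathbb{R}\oplus\mathbb{R}\mathbf{i}\subset\mathbb{H}$. Evaluating $p$ at a real $t$ and writing each coefficient $p_i=a_i+b_i\mathbf{j}$ ($a_i,b_i\in\mathbb{C}$) gives $p(t)=f_1(t)+f_2(t)\mathbf{j}$ with $f_1,f_2\in\mathbb{C}[t]$; the factorization $p(t)=g(t)(g_1(t)+g_2(t)\mathbf{j})$ means $f_1=gg_1$, $f_2=gg_2$. For $q\in\mathbb{H}$, $[q]=\{aqa^{-1}:a\in\mathbb{H},a\neq0\}$. $|z|$ and $\operatorname{Im}z$ denote modulus and imaginary part of $z\in\mathbb{C}$. *)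

theory Defs
  imports "HOL-Computational_Algebra.Polynomial_Factorial" "HOL-Computational_Algebra.Field_as_Ring" Complex_Main
begin

datatype quat = Quat (qr: real) (qi: real) (qj: real) (qk: real)

lemma quat_eqI: "qr a = qr b \<Longrightarrow> qi a = qi b \<Longrightarrow> qj a = qj b \<Longrightarrow> qk a = qk b \<Longrightarrow> a = b"
  by (cases a, cases b) simp

instantiation quat :: ring_1
begin

definition "0 = Quat 0 0 0 0"
definition "1 = Quat 1 0 0 0"
definition "a + b = Quat (qr a + qr b) (qi a + qi b) (qj a + qj b) (qk a + qk b)"
definition "a - b = Quat (qr a - qr b) (qi a - qi b) (qj a - qj b) (qk a - qk b)"
definition "- a = Quat (- qr a) (- qi a) (- qj a) (- qk a)"
definition "a * b = Quat
   (qr a * qr b - qi a * qi b - qj a * qj b - qk a * qk b)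
   (qr a * qi b + qi a * qr b + qj a * qk b - qk a * qj b)
   (qr a * qj b - qi a * qk b + qj a * qr b + qk a * qi b)
   (qr a * qk b + qi a * qj b - qj a * qi b + qk a * qr b)"

instance
  by intro_classes
     (auto intro!: quat_eqI
       simp: zero_quat_def one_quat_def plus_quat_def minus_quat_def uminus_quat_def
             times_quat_def algebra_simps)

end

instantiation quat :: inverse
begin

definition "inverse a = (let m = (qr a)\<^sup>2 + (qi a)\<^sup>2 + (qj a)\<^sup>2 + (qk a)\<^sup>2 in
   Quat (qr a / m) (- qi a / m) (- qj a / m) (- qk a / m))"
definition "divide a b = a * inverse (b :: quat)"

instance ..

end

definition quat_i :: quat where "quat_i = Quat 0 1 0 0"
definition quat_j :: quat where "quat_j = Quat 0 0 1 0"
definition quat_k :: quat where "quat_k = Quat 0 0 0 1"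

definition of_cplx :: "complex \<Rightarrow> quat" where
  "of_cplx z = Quat (Re z) (Im z) 0 0"

text \<open>Writing q = a + b j with a, b complex: a = qfst q, b = qsnd q
  (indeed (x + y i) j = x j + y k).\<close>

definition qfst :: "quat \<Rightarrow> complex" where "qfst q = Complex (qr q) (qi q)"
definition qsnd :: "quat \<Rightarrow> complex" where "qsnd q = Complex (qj q) (qk q)"

definition qclass :: "quat \<Rightarrow> quat set" where
  "qclass q = {a * q * inverse a | a. a \<noteq> 0}"

definition pconj :: "complex poly \<Rightarrow> complex poly" where
  "pconj h = map_poly cnj h"

definition omega :: "complex poly \<Rightarrow> complex poly \<Rightarrow> complex \<Rightarrow> quat" where
  "omega g1 g2 \<eta> =
     (let a = poly g1 (cnj \<eta>); b = poly g2 (cnj \<eta>);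
          D = (cmod b)\<^sup>2 + (cmod a)\<^sup>2
      in of_cplx (complex_of_real (1 / D)) *
           (of_cplx (complex_of_real ((cmod b)\<^sup>2) * cnj \<eta> + complex_of_real ((cmod a)\<^sup>2) * \<eta>)
            + of_cplx (2 * b * cnj a * complex_of_real (Im \<eta>)) * quat_k))"

end

theory Submission
  imports Defs
begin


definition mkq :: "complex \<Rightarrow> complex \<Rightarrow> quat" where
  "mkq u v = Quat (Re u) (Im u) (Re v) (Im v)"

lemma mkq_mult: "mkq u v * mkq u' v' = mkq (u*u' - v*cnj v') (u*v' + v*cnj u')"
  by (simp add: mkq_def times_quat_def algebra_simps)

lemma mkq_add: "mkq u v + mkq u' v' = mkq (u+u') (v+v')"
  by (simp add: mkq_def plus_quat_def)

lemma mkq_eq_iff: "mkq u v = mkq u' v' \<longleftrightarrow> u = u' \<and> v = v'"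
  by (auto simp: mkq_def complex_eq_iff)

lemma mkq_zero: "0 = mkq 0 0" by (simp add: mkq_def zero_quat_def)
lemma mkq_one: "1 = mkq 1 0" by (simp add: mkq_def one_quat_def)
lemma of_cplx_mkq: "of_cplx z = mkq z 0" by (simp add: mkq_def of_cplx_def)
lemma mkq_qfst: "mkq (qfst q) (qsnd q) = q" by (cases q) (simp add: mkq_def qfst_def qsnd_def)
lemma qfst_mkq[simp]: "qfst (mkq u v) = u" by (simp add: mkq_def qfst_def)
lemma qsnd_mkq[simp]: "qsnd (mkq u v) = v" by (simp add: mkq_def qsnd_def)

lemma mkq_eq_0_iff: "mkq u v = 0 \<longleftrightarrow> u = 0 \<and> v = 0"
  by (simp add: mkq_zero mkq_eq_iff)

lemma mkq_sum: "(\<Sum>i\<in>A. mkq (u i) (v i)) = mkq (\<Sum>i\<in>A. u i) (\<Sum>i\<in>A. v i)"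
  by (induction A rule: infinite_finite_induct) (auto simp: mkq_zero mkq_add)

lemma of_cplx_mult: "of_cplx (a*b) = of_cplx a * of_cplx b"
  by (simp add: of_cplx_mkq mkq_mult)
lemma of_cplx_one: "of_cplx 1 = 1" by (simp add: of_cplx_mkq mkq_one)
lemma of_cplx_power: "of_cplx (a^k) = of_cplx a ^ k"
  by (induction k) (simp_all add: of_cplx_one of_cplx_mult)

definition nq :: "quat \<Rightarrow> real" where
  "nq q = (qr q)\<^sup>2 + (qi q)\<^sup>2 + (qj q)\<^sup>2 + (qk q)\<^sup>2"

lemma nq_mult: "nq (a*b) = nq a * nq b"
  by (simp add: nq_def times_quat_def power2_eq_square algebra_simps)

lemma nq_pos: "(a::quat) \<noteq> 0 \<Longrightarrow> nq a > 0"
proof -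
  assume "a \<noteq> 0"
  then have "\<not> (qr a = 0 \<and> qi a = 0 \<and> qj a = 0 \<and> qk a = 0)"
    by (cases a) (auto simp: zero_quat_def)
  then show ?thesis unfolding nq_def
    by (metis add_nonneg_nonneg add_pos_nonneg add_nonneg_pos zero_le_power2 zero_less_power2 order_less_le)
qed

lemma quat_inverse_alt: "inverse (Quat r s t u) = (let m = r\<^sup>2 + s\<^sup>2 + t\<^sup>2 + u\<^sup>2 in Quat (r/m) (-s/m) (-t/m) (-u/m))"
  by (simp add: inverse_quat_def)

lemma quat_inverses: assumes "(a::quat) \<noteq> 0" shows "a * inverse a = 1 \<and> inverse a * a = 1"
proof (cases a)
  case (Quat r s t u)
  define m where "m = r\<^sup>2 + s\<^sup>2 + t\<^sup>2 + u\<^sup>2"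
  have "m \<noteq> 0" using nq_pos[OF assms] by (simp add: Quat m_def nq_def)
  then have e: "r*r/m + s*s/m + t*t/m + u*u/m = 1"
    by (simp add: m_def add_divide_distrib[symmetric] power2_eq_square)
  show ?thesis unfolding Quat quat_inverse_alt Let_def m_def[symmetric] using e
    by (simp add: times_quat_def one_quat_def algebra_simps)
qed

lemma quat_right_inverse: "(a::quat) \<noteq> 0 \<Longrightarrow> a * inverse a = 1"
  using quat_inverses by blast
lemma quat_left_inverse: "(a::quat) \<noteq> 0 \<Longrightarrow> inverse a * a = 1"
  using quat_inverses by blast

lemma qr_comm: "qr (a*b) = qr (b*a)"
  by (simp add: times_quat_def algebra_simps)

lemma nq_one: "nq 1 = 1" by (simp add: nq_def one_quat_def)

lemma conj_inv:
  assumes "(a::quat) \<noteq> 0"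
  shows "qr (a*q*inverse a) = qr q" "nq (a*q*inverse a) = nq q"
proof -
  have "qr (a*q*inverse a) = qr (q * (inverse a * a))"
    by (metis qr_comm mult.assoc)
  then show "qr (a*q*inverse a) = qr q" using quat_left_inverse[OF assms] by simp
  have "nq a * nq (inverse a) = 1"
    using quat_right_inverse[OF assms] nq_mult nq_one by metis
  then show "nq (a*q*inverse a) = nq q" by (simp add: nq_mult)
qed

lemma conj_power: "(a::quat) \<noteq> 0 \<Longrightarrow> (a*q*inverse a)^k = a * q^k * inverse a"
proof (induction k)
  case 0 then show ?case using quat_right_inverse by simp
next
  case (Suc k)
  have "(a*q*inverse a)^Suc k = (a*q*inverse a) * (a * q^k * inverse a)"
    using Suc by simp
  also have "\<dots> = a * q * (inverse a * a) * q^k * inverse a" by (simp add: mult.assoc)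
  also have "\<dots> = a * q^Suc k * inverse a" using quat_left_inverse[OF Suc.prems] by (simp add: mult.assoc)
  finally show ?case .
qed

lemma real_comm: "of_cplx (complex_of_real r) * a = a * of_cplx (complex_of_real r)"
  by (simp add: of_cplx_def times_quat_def)



lemma Pconj:
  fixes pc :: "nat \<Rightarrow> quat" and a :: quat
  assumes a: "a \<noteq> 0"
  shows "(\<Sum>i=1..n. pc i * (a * of_cplx z * inverse a)^i) + of_cplx (complex_of_real d0) =
    mkq (qfst a * ((\<Sum>i=1..n. qfst (pc i) * z^i) + complex_of_real d0) - cnj (qsnd a) * (\<Sum>i=1..n. qsnd (pc i) * z^i))
        (qsnd a * ((\<Sum>i=1..n. qfst (pc i) * cnj z^i) + complex_of_real d0) + cnj (qfst a) * (\<Sum>i=1..n. qsnd (pc i) * cnj z^i))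
     * inverse a"
proof -
  define c where "c = qfst a"
  define d where "d = qsnd a"
  have ac: "a = mkq c d" by (simp add: c_def d_def mkq_qfst)
  have t: "pc i * (a * of_cplx z * inverse a)^i = mkq ((qfst (pc i) * c - qsnd (pc i) * cnj d) * z^i)
        ((qfst (pc i) * d + qsnd (pc i) * cnj c) * cnj z ^ i) * inverse a" for i
  proof -
    have "pc i * (a * of_cplx z * inverse a)^i = (pc i * a * of_cplx (z^i)) * inverse a"
      using conj_power[OF a] by (simp add: of_cplx_power mult.assoc)
    also have "pc i * a * of_cplx (z^i) = mkq ((qfst (pc i) * c - qsnd (pc i) * cnj d) * z^i)
        ((qfst (pc i) * d + qsnd (pc i) * cnj c) * cnj z ^ i)"
      by (subst (1) mkq_qfst[symmetric, of "pc i"]) (simp add: ac of_cplx_mkq mkq_mult)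
    finally show ?thesis .
  qed
  have d0t: "of_cplx (complex_of_real d0) = mkq (complex_of_real d0 * c) (complex_of_real d0 * d) * inverse a"
  proof -
    have "of_cplx (complex_of_real d0) = of_cplx (complex_of_real d0) * a * inverse a"
      using quat_right_inverse[OF a] by (simp add: mult.assoc)
    then show ?thesis by (simp add: ac of_cplx_mkq mkq_mult)
  qed
  have "(\<Sum>i=1..n. pc i * (a * of_cplx z * inverse a)^i) + of_cplx (complex_of_real d0)
     = (mkq (\<Sum>i=1..n. (qfst (pc i) * c - qsnd (pc i) * cnj d) * z^i)
        (\<Sum>i=1..n. (qfst (pc i) * d + qsnd (pc i) * cnj c) * cnj z ^ i)
        + mkq (complex_of_real d0 * c) (complex_of_real d0 * d)) * inverse a"
    unfolding t d0t by (simp add: sum_distrib_right[symmetric] mkq_sum distrib_right)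
  also have "\<dots> = mkq (c * ((\<Sum>i=1..n. qfst (pc i) * z^i) + complex_of_real d0) - cnj d * (\<Sum>i=1..n. qsnd (pc i) * z^i))
        (d * ((\<Sum>i=1..n. qfst (pc i) * cnj z^i) + complex_of_real d0) + cnj c * (\<Sum>i=1..n. qsnd (pc i) * cnj z^i)) * inverse a"
    by (simp add: mkq_add sum_distrib_left sum_subtractf sum.distrib algebra_simps)
  finally show ?thesis by (simp add: c_def d_def)
qed

lemma mult_inv_zero: "(a::quat) \<noteq> 0 \<Longrightarrow> X * inverse a = 0 \<longleftrightarrow> X = 0"
  by (metis mult.assoc mult_1_right mult_zero_left quat_left_inverse)



lemma poly_pconj: "poly (pconj h) z = cnj (poly h (cnj z))"
proof -
  have "cnj (poly h (cnj z)) = poly (map_poly cnj h) z"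
    using poly_cnj[of h "cnj z"] by (simp only: complex_cnj_cnj)
  then show ?thesis by (simp only: pconj_def)
qed

lemma coprime_no_common_root:
  fixes g1 g2 :: "complex poly"
  assumes "gcd g1 g2 = 1" "poly g1 w = 0" "poly g2 w = 0"
  shows False
proof -
  have "[:-w,1:] dvd g1" "[:-w,1:] dvd g2" using assms poly_eq_0_iff_dvd by blast+
  then have "[:-w,1:] dvd gcd g1 g2" by simp
  then have "[:-w,1:] dvd 1" using assms(1) by simp
  then have "degree [:-w,1:] = 0" by (subst (asm) is_unit_iff_degree) auto
  then show False by simp
qed

lemma rep:
  fixes x :: quat
  shows "\<exists>a z. a \<noteq> 0 \<and> x * a = a * of_cplx z"
proof (cases x)
  case (Quat r s t w)
  define b where "b = sqrt (s\<^sup>2 + t\<^sup>2 + w\<^sup>2)"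
  have nn: "0 \<le> s\<^sup>2 + t\<^sup>2 + w\<^sup>2" by simp
  have hb: "b * b = s*s + t*t + w*w" unfolding b_def real_sqrt_mult_self abs_of_nonneg[OF nn]
    by (simp add: power2_eq_square)
  show ?thesis
  proof (cases "b + s = 0 \<and> t = 0 \<and> w = 0")
    case True
    then have "x = of_cplx (Complex r s)" by (simp add: Quat of_cplx_def)
    then show ?thesis by (intro exI[of _ 1] exI[of _ "Complex r s"]) simp
  next
    case False
    define a where "a = Quat (b+s) 0 (-w) t"
    have "a \<noteq> 0" using False by (auto simp: a_def zero_quat_def)
    moreover have "x * a = a * of_cplx (Complex r b)"
      by (rule quat_eqI) (simp_all add: Quat a_def of_cplx_def times_quat_def algebra_simps hb)
    ultimately show ?thesis by blast
  qed
qed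

lemma conj_form: "(a::quat) \<noteq> 0 \<Longrightarrow> x * a = a * q \<Longrightarrow> x = a * q * inverse a"
  by (metis mult.assoc mult_1_right quat_right_inverse)

lemma inv_of_cplx: "qr (of_cplx z) = Re z" "nq (of_cplx z) = (Re z)\<^sup>2 + (Im z)\<^sup>2"
  by (simp_all add: of_cplx_def nq_def)

lemma omega_conj:
  fixes g1 g2 :: "complex poly" and \<eta> :: complex
  defines "A \<equiv> poly g1 (cnj \<eta>)" and "B \<equiv> poly g2 (cnj \<eta>)"
  assumes nz: "\<not> (A = 0 \<and> B = 0)"
  shows "omega g1 g2 \<eta> * mkq (cnj A) (-B) = mkq (cnj A) (-B) * of_cplx \<eta>"
proof -
  define D where "D = (cmod B)\<^sup>2 + (cmod A)\<^sup>2"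
  have Dpos: "D > 0" using nz by (auto simp: D_def add_pos_nonneg add_nonneg_pos)
  have qk: "quat_k = mkq 0 \<i>" by (simp add: quat_k_def mkq_def)
  have om: "omega g1 g2 \<eta> = mkq ((complex_of_real ((cmod B)\<^sup>2) * cnj \<eta> + complex_of_real ((cmod A)\<^sup>2) * \<eta>) / complex_of_real D)
        (\<i> * (2 * B * cnj A * complex_of_real (Im \<eta>)) / complex_of_real D)"
    unfolding omega_def Let_def A_def[symmetric] B_def[symmetric] D_def[symmetric]
    unfolding of_cplx_mkq qk mkq_mult mkq_add
    by (simp only: mkq_eq_iff) (simp add: field_simps)
  have he: "cnj \<eta> = \<eta> - 2 * \<i> * complex_of_real (Im \<eta>)"
    by (simp add: complex_eq_iff)
  have Dc: "complex_of_real D = A * cnj A + B * cnj B"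
    unfolding D_def of_real_add complex_norm_square by (simp add: add.commute)
  have Dnz: "complex_of_real D \<noteq> 0" using Dpos by simp
  define N where "N = complex_of_real ((cmod B)\<^sup>2) * cnj \<eta> + complex_of_real ((cmod A)\<^sup>2) * \<eta>"
  define M where "M = \<i> * (2 * B * cnj A * complex_of_real (Im \<eta>))"
  have N: "N = B * cnj B * (\<eta> - 2 * \<i> * complex_of_real (Im \<eta>)) + A * cnj A * \<eta>"
    unfolding N_def complex_norm_square he ..
  have e1: "N * cnj A + M * cnj B = cnj A * \<eta> * complex_of_real D"
    unfolding N Dc M_def by (simp add: algebra_simps)
  have e2: "N * (- B) + M * A = - B * cnj \<eta> * complex_of_real D"
    unfolding N Dc M_def he by (simp add: algebra_simps)
  show ?thesis
    unfolding om of_cplx_mkq mkq_mult mkq_eq_iff N_def[symmetric] M_def[symmetric]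
  proof (intro conjI)
    show "N / complex_of_real D * cnj A - M / complex_of_real D * cnj (- B) = cnj A * \<eta> - - B * cnj 0"
      using Dnz e1 by (simp add: field_simps)
    show "N / complex_of_real D * - B + M / complex_of_real D * cnj (cnj A) = cnj A * 0 + - B * cnj \<eta>"
      using Dnz e2 by (simp add: field_simps)
  qed
qed



lemma Pzero_iff:
  fixes pc :: "nat \<Rightarrow> quat" and g g1 g2 :: "complex poly" and a :: quat
  assumes a: "a \<noteq> 0"
    and h1: "\<And>z. (\<Sum>i=1..n. qfst (pc i) * z^i) + complex_of_real d0 = poly g z * poly g1 z"
    and h2: "\<And>z. (\<Sum>i=1..n. qsnd (pc i) * z^i) = poly g z * poly g2 z"
  shows "((\<Sum>i=1..n. pc i * (a * of_cplx z * inverse a)^i) + of_cplx (complex_of_real d0) = 0) \<longleftrightarrow>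
   (qfst a * (poly g z * poly g1 z) - cnj (qsnd a) * (poly g z * poly g2 z) = 0 \<and>
    qsnd a * (poly g (cnj z) * poly g1 (cnj z)) + cnj (qfst a) * (poly g (cnj z) * poly g2 (cnj z)) = 0)"
  unfolding Pconj[OF a] h1 h2 mult_inv_zero[OF a] mkq_eq_0_iff ..

lemma eta_case:
  fixes g g1 g2 :: "complex poly" and x a :: quat
  assumes a: "a \<noteq> 0" and xa: "x * a = a * of_cplx z"
    and E1: "qfst a * (poly g z * poly g1 z) - cnj (qsnd a) * (poly g z * poly g2 z) = 0"
    and E2: "qsnd a * (poly g (cnj z) * poly g1 (cnj z)) + cnj (qfst a) * (poly g (cnj z) * poly g2 (cnj z)) = 0"
    and gc: "poly g (cnj z) \<noteq> 0"
    and cop: "gcd g1 g2 = 1"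
  shows "(poly g z = 0 \<or> poly (g1 * pconj g1 + g2 * pconj g2) z = 0) \<and> x = omega g1 g2 z"
proof -
  define c where "c = qfst a"
  define d where "d = qsnd a"
  define A where "A = poly g1 (cnj z)"
  define B where "B = poly g2 (cnj z)"
  have ac: "a = mkq c d" by (simp add: c_def d_def mkq_qfst)
  have cd: "\<not> (c = 0 \<and> d = 0)" using a ac mkq_eq_0_iff by auto
  have AB: "\<not> (A = 0 \<and> B = 0)" using coprime_no_common_root[OF cop, of "cnj z"] unfolding A_def B_def by blast
  have E2': "d * A + cnj c * B = 0"
  proof -
    have "poly g (cnj z) * (d * A + cnj c * B) = 0" using E2 unfolding c_def d_def A_def B_def
      by (simp add: algebra_simps)
    then show ?thesis using gc by simp
  qed
  then have E2c: "cnj d * cnj A + c * cnj B = 0"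
    by (metis complex_cnj_add complex_cnj_cnj complex_cnj_mult complex_cnj_zero)
  have gt: "poly (g1 * pconj g1 + g2 * pconj g2) z = poly g1 z * cnj A + poly g2 z * cnj B"
    by (simp add: poly_pconj A_def B_def)
  have part1: "poly g z = 0 \<or> poly (g1 * pconj g1 + g2 * pconj g2) z = 0"
  proof (cases "poly g z = 0")
    case False
    have e1: "c * poly g1 z = cnj d * poly g2 z"
    proof -
      have "poly g z * (c * poly g1 z - cnj d * poly g2 z) = 0" using E1 unfolding c_def d_def
        by (simp add: algebra_simps)
      then show ?thesis using False by simp
    qed
    have "c * (poly g1 z * cnj A + poly g2 z * cnj B) = poly g2 z * (cnj d * cnj A + c * cnj B)"
      using e1 by (simp add: algebra_simps)
    then have 1: "c * (poly g1 z * cnj A + poly g2 z * cnj B) = 0" using E2c by simp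
    have "cnj d * (poly g1 z * cnj A + poly g2 z * cnj B) = poly g1 z * (cnj d * cnj A + c * cnj B)"
      using e1 by (simp add: algebra_simps)
    then have 2: "cnj d * (poly g1 z * cnj A + poly g2 z * cnj B) = 0" using E2c by simp
    from 1 2 cd show ?thesis unfolding gt by auto
  qed simp
  define a0 where "a0 = mkq (cnj A) (- B)"
  have a0nz: "a0 \<noteq> 0" using AB by (simp add: a0_def mkq_eq_0_iff)
  obtain \<mu> where mu: "c = cnj A * \<mu>" "cnj d = - cnj B * \<mu>"
  proof (cases "A = 0")
    case True
    then have "B \<noteq> 0" using AB by simp
    then show ?thesis using E2c True by (intro that[of "- cnj d / cnj B"]) auto
  next
    case False
    then show ?thesis using E2c by (intro that[of "c / cnj A"]) (auto simp: field_simps eq_neg_iff_add_eq_0 algebra_simps)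
  qed
  have aa0: "a = a0 * of_cplx \<mu>"
    unfolding ac a0_def of_cplx_mkq mkq_mult mkq_eq_iff using mu
    by (simp add: mu(1)) (metis complex_cnj_cnj complex_cnj_minus complex_cnj_mult)
  have munz: "\<mu> \<noteq> 0" using a aa0 by (auto simp: of_cplx_mkq mkq_zero[symmetric])
  have "(x * a0 - a0 * of_cplx z) * of_cplx \<mu> = 0"
    using xa unfolding aa0 by (simp add: algebra_simps mult.assoc of_cplx_mult[symmetric])
  then have "(x * a0 - a0 * of_cplx z) * of_cplx \<mu> * of_cplx (inverse \<mu>) = 0" by simp
  then have xa0: "x * a0 = a0 * of_cplx z" using munz
    by (simp add: mult.assoc of_cplx_mult[symmetric] of_cplx_one)
  have "omega g1 g2 z * a0 = a0 * of_cplx z" unfolding a0_def A_def B_def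
    by (rule omega_conj) (use AB A_def B_def in auto)
  then have "x = omega g1 g2 z" using xa0 conj_form[OF a0nz] by metis
  with part1 show ?thesis by blast
qed



lemma inverse_one_quat: "inverse (1::quat) = 1"
  by (simp add: one_quat_def inverse_quat_def)

lemma qfst_one: "qfst 1 = 1" and qsnd_one: "qsnd 1 = 0"
  by (simp_all add: mkq_one)

lemma qj_mkq: "quat_j = mkq 0 1" by (simp add: quat_j_def mkq_def)

lemma of_cplx_j: "of_cplx z * quat_j = quat_j * of_cplx (cnj z)"
  by (simp add: of_cplx_mkq qj_mkq mkq_mult)
  
lemma quat_j_nz: "(a::quat) \<noteq> 0 \<Longrightarrow> a * quat_j \<noteq> 0"
proof
  assume "a \<noteq> 0" "a * quat_j = 0"
  then have "nq a * nq quat_j = 0" using nq_mult[of a quat_j] by (simp add: nq_def zero_quat_def)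
  moreover have "nq quat_j = 1" by (simp add: nq_def quat_j_def)
  ultimately show False using nq_pos[OF \<open>a \<noteq> 0\<close>] by simp
qed

lemma conj_invariants:
  assumes "(a::quat) \<noteq> 0" "x = a * of_cplx z * inverse a"
  shows "qr x = Re z" "nq x = (Re z)\<^sup>2 + (Im z)\<^sup>2"
  using conj_inv[OF assms(1)] inv_of_cplx assms(2) by simp_all

lemma cplx_eq_or_cnj:
  assumes "Re l = Re m" "(Re l)\<^sup>2 + (Im l)\<^sup>2 = (Re m)\<^sup>2 + (Im m)\<^sup>2"
  shows "m = l \<or> m = cnj l"
proof -
  have "(Im l)\<^sup>2 = (Im m)\<^sup>2" using assms by simp
  then have "Im m = Im l \<or> Im m = - Im l" by (metis power2_eq_iff)
  then show ?thesis using assms(1) by (auto simp: complex_eq_iff)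
qed

lemma gt_nonreal:
  fixes g1 g2 :: "complex poly"
  assumes cop: "gcd g1 g2 = 1" and r: "poly (g1 * pconj g1 + g2 * pconj g2) z = 0"
  shows "Im z \<noteq> 0"
proof
  assume "Im z = 0"
  then have cz: "cnj z = z" by (simp add: complex_eq_iff)
  have "poly g1 z * cnj (poly g1 z) + poly g2 z * cnj (poly g2 z) = 0"
    using r by (simp add: poly_pconj cz)
  then have "complex_of_real ((cmod (poly g1 z))\<^sup>2 + (cmod (poly g2 z))\<^sup>2) = 0"
    unfolding of_real_add complex_norm_square .
  then have "(cmod (poly g1 z))\<^sup>2 + (cmod (poly g2 z))\<^sup>2 = 0" by (simp only: of_real_eq_0_iff)
  then have "poly g1 z = 0 \<and> poly g2 z = 0"
    by (simp only: sum_power2_eq_zero_iff norm_eq_zero)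
  then show False using coprime_no_common_root[OF cop] by blast
qed



theorem theorem4:
  fixes n :: nat and pc :: "nat \<Rightarrow> quat" and d0 :: real
    and g g1 g2 :: "complex poly"
  assumes n_pos: "n \<ge> 1"
    and lead: "pc n \<noteq> 0"
    and d0: "d0 \<in> {0, 1}"
    and fac1: "(\<Sum>i=1..n. monom (qfst (pc i)) i) + [:complex_of_real d0:] = g * g1"
    and fac2: "(\<Sum>i=1..n. monom (qsnd (pc i)) i) = g * g2"
    and cop: "gcd g1 g2 = 1"
  shows
   "(let P = (\<lambda>x::quat. (\<Sum>i=1..n. pc i * x ^ i) + of_cplx (complex_of_real d0));
         gt = g1 * pconj g1 + g2 * pconj g2;
         Xi = {z. poly g z = 0 \<and> Im z = 0};
         Lam = {z. poly g z = 0 \<and> Im z \<noteq> 0 \<and> poly g (cnj z) = 0};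
         Eta = {z. poly g z = 0 \<and> Im z \<noteq> 0 \<and> poly g (cnj z) \<noteq> 0}
               \<union> {z. poly gt z = 0 \<and> poly g z \<noteq> 0 \<and> poly g (cnj z) \<noteq> 0};
         R = of_cplx ` Xi;
         Om = omega g1 g2 ` Eta;
         C = (\<Union>l\<in>Lam. qclass (of_cplx l))
     in {x. P x = 0} = R \<union> Om \<union> C
        \<and> R \<inter> Om = {} \<and> R \<inter> C = {} \<and> Om \<inter> C = {}
        \<and> (\<forall>l\<in>Lam. \<forall>m\<in>Lam. qclass (of_cplx l) \<inter> qclass (of_cplx m) \<noteq> {}
                 \<longrightarrow> m = l \<or> m = cnj l))"
proof -
  define P where "P = (\<lambda>x::quat. (\<Sum>i=1..n. pc i * x ^ i) + of_cplx (complex_of_real d0))"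
  define gt where "gt = g1 * pconj g1 + g2 * pconj g2"
  define Xi where "Xi = {z. poly g z = 0 \<and> Im z = 0}"
  define Lam where "Lam = {z. poly g z = 0 \<and> Im z \<noteq> 0 \<and> poly g (cnj z) = 0}"
  define Eta where "Eta = {z. poly g z = 0 \<and> Im z \<noteq> 0 \<and> poly g (cnj z) \<noteq> 0}
               \<union> {z. poly gt z = 0 \<and> poly g z \<noteq> 0 \<and> poly g (cnj z) \<noteq> 0}"
  define R where "R = of_cplx ` Xi"
  define Om where "Om = omega g1 g2 ` Eta"
  define C where "C = (\<Union>l\<in>Lam. qclass (of_cplx l))"
  have h1: "(\<Sum>i=1..n. qfst (pc i) * z^i) + complex_of_real d0 = poly g z * poly g1 z" for z
    using arg_cong[OF fac1, of "\<lambda>p. poly p z"] by (simp add: poly_sum poly_monom)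
  have h2: "(\<Sum>i=1..n. qsnd (pc i) * z^i) = poly g z * poly g2 z" for z
    using arg_cong[OF fac2, of "\<lambda>p. poly p z"] by (simp add: poly_sum poly_monom)
  have PZ: "P (a * of_cplx z * inverse a) = 0 \<longleftrightarrow>
   (qfst a * (poly g z * poly g1 z) - cnj (qsnd a) * (poly g z * poly g2 z) = 0 \<and>
    qsnd a * (poly g (cnj z) * poly g1 (cnj z)) + cnj (qfst a) * (poly g (cnj z) * poly g2 (cnj z)) = 0)"
    if "a \<noteq> 0" for a z
    unfolding P_def using Pzero_iff[OF that h1 h2] by simp
  have Preal: "P (of_cplx z) = 0 \<longleftrightarrow> poly g z * poly g1 z = 0 \<and> poly g (cnj z) * poly g2 (cnj z) = 0" for z
    using PZ[of 1 z] by (simp add: inverse_one_quat qfst_one qsnd_one)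
  have gtE: "poly gt z = poly g1 z * cnj (poly g1 (cnj z)) + poly g2 z * cnj (poly g2 (cnj z))" for z
    by (simp add: gt_def poly_pconj)
  have Eta_nonreal: "Im z \<noteq> 0" if "z \<in> Eta" for z
    using that gt_nonreal[OF cop] unfolding Eta_def gt_def by blast
  have Eta_g: "poly g (cnj z) \<noteq> 0" if "z \<in> Eta" for z
    using that unfolding Eta_def by blast
  have ABnz: "\<not> (poly g1 (cnj z) = 0 \<and> poly g2 (cnj z) = 0)" for z
    using coprime_no_common_root[OF cop] by blast
  have om_conj: "omega g1 g2 z = mkq (cnj (poly g1 (cnj z))) (- poly g2 (cnj z)) * of_cplx z
       * inverse (mkq (cnj (poly g1 (cnj z))) (- poly g2 (cnj z)))"
   and om_nz: "mkq (cnj (poly g1 (cnj z))) (- poly g2 (cnj z)) \<noteq> 0" for z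
  proof -
    show nz: "mkq (cnj (poly g1 (cnj z))) (- poly g2 (cnj z)) \<noteq> 0"
      using ABnz[of z] by (simp add: mkq_eq_0_iff)
    show "omega g1 g2 z = mkq (cnj (poly g1 (cnj z))) (- poly g2 (cnj z)) * of_cplx z
       * inverse (mkq (cnj (poly g1 (cnj z))) (- poly g2 (cnj z)))"
      by (rule conj_form[OF nz omega_conj]) (use ABnz in blast)
  qed
  have om_inv: "qr (omega g1 g2 z) = Re z" "nq (omega g1 g2 z) = (Re z)\<^sup>2 + (Im z)\<^sup>2" for z
    using conj_invariants[OF om_nz om_conj] by blast+
  have C_inv: "qr x = Re l \<and> nq x = (Re l)\<^sup>2 + (Im l)\<^sup>2" if "x \<in> qclass (of_cplx l)" for x l
    using that conj_invariants unfolding qclass_def by blast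
  have sub1: "{x. P x = 0} \<subseteq> R \<union> Om \<union> C"
  proof
    fix x assume "x \<in> {x. P x = 0}"
    then have Px: "P x = 0" by simp
    obtain a z where a: "a \<noteq> 0" and xa: "x * a = a * of_cplx z" using rep by blast
    have xc: "x = a * of_cplx z * inverse a" using conj_form[OF a xa] .
    have E: "qfst a * (poly g z * poly g1 z) - cnj (qsnd a) * (poly g z * poly g2 z) = 0"
      "qsnd a * (poly g (cnj z) * poly g1 (cnj z)) + cnj (qfst a) * (poly g (cnj z) * poly g2 (cnj z)) = 0"
      using PZ[OF a, of z] Px xc by simp_all
    show "x \<in> R \<union> Om \<union> C"
    proof (cases "Im z = 0")
      case True
      have "z = complex_of_real (Re z)" using True by (metis complex_is_Real_iff of_real_Re)
      then have zr: "of_cplx z = of_cplx (complex_of_real (Re z))" by simp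
      have cz: "cnj z = z" using True by (simp add: complex_eq_iff)
      have "x = of_cplx (complex_of_real (Re z)) * a * inverse a" using xc zr real_comm by metis
      then have xz: "x = of_cplx z" using quat_right_inverse[OF a] zr by (simp add: mult.assoc)
      then have "P (of_cplx z) = 0" using Px by simp
      then have "poly g z * poly g1 z = 0 \<and> poly g z * poly g2 z = 0" using Preal cz by simp
      then have "poly g z = 0" using coprime_no_common_root[OF cop, of z] by auto
      then have "z \<in> Xi" using True by (simp add: Xi_def)
      then show ?thesis using xz by (simp add: R_def)
    next
      case False
      show ?thesis
      proof (cases "poly g (cnj z) = 0")
        case gc: True
        show ?thesis
        proof (cases "poly g z = 0")
          case True
          then have "z \<in> Lam" using False gc by (simp add: Lam_def)
          moreover have "x \<in> qclass (of_cplx z)" using xc a unfolding qclass_def by blast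
          ultimately show ?thesis unfolding C_def by blast
        next
          case gz: False
          define a' where "a' = a * quat_j"
          have a': "a' \<noteq> 0" using quat_j_nz[OF a] a'_def by simp
          have xa': "x * a' = a' * of_cplx (cnj z)" unfolding a'_def using xa of_cplx_j
            by (metis mult.assoc)
          have "P (a' * of_cplx (cnj z) * inverse a') = 0" using conj_form[OF a' xa'] Px by simp
          then have E': "qfst a' * (poly g (cnj z) * poly g1 (cnj z)) - cnj (qsnd a') * (poly g (cnj z) * poly g2 (cnj z)) = 0"
             "qsnd a' * (poly g (cnj (cnj z)) * poly g1 (cnj (cnj z))) + cnj (qfst a') * (poly g (cnj (cnj z)) * poly g2 (cnj (cnj z))) = 0"
            using PZ[OF a', of "cnj z"] by simp_all
          have gz': "poly g (cnj (cnj z)) \<noteq> 0" using gz by simp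
          from eta_case[OF a' xa' E'(1) E'(2) gz' cop] have xo: "x = omega g1 g2 (cnj z)" by blast
          have "cnj z \<in> Eta" using gc gz False by (simp add: Eta_def)
          then show ?thesis using xo by (simp add: Om_def)
        qed
      next
        case gc: False
        from eta_case[OF a xa E(1) E(2) gc cop]
        have 1: "poly g z = 0 \<or> poly gt z = 0" and xo: "x = omega g1 g2 z" by (auto simp: gt_def)
        have "z \<in> Eta" using 1 gc False by (auto simp: Eta_def)
        then show ?thesis using xo by (simp add: Om_def)
      qed
    qed
  qed
  have sub2: "R \<union> Om \<union> C \<subseteq> {x. P x = 0}"
  proof (intro Un_least subsetI)
    fix x assume "x \<in> R"
    then obtain z where xz: "x = of_cplx z" and z: "poly g z = 0" "Im z = 0" by (auto simp: R_def Xi_def)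
    have cz: "cnj z = z" using z by (simp add: complex_eq_iff)
    show "x \<in> {x. P x = 0}" using Preal[of z] xz z cz by simp
  next
    fix x assume "x \<in> Om"
    then obtain z where xz: "x = omega g1 g2 z" and zE: "z \<in> Eta" by (auto simp: Om_def)
    have "poly g z * poly gt z = 0" using zE by (auto simp: Eta_def)
    then have "P (mkq (cnj (poly g1 (cnj z))) (- poly g2 (cnj z)) * of_cplx z
       * inverse (mkq (cnj (poly g1 (cnj z))) (- poly g2 (cnj z)))) = 0"
      unfolding PZ[OF om_nz] gtE by (simp add: algebra_simps)
    then show "x \<in> {x. P x = 0}" using xz om_conj by simp
  next
    fix x assume "x \<in> C"
    then obtain l where l: "l \<in> Lam" and "x \<in> qclass (of_cplx l)" by (auto simp: C_def)
    then obtain a where a: "a \<noteq> 0" and xl: "x = a * of_cplx l * inverse a" by (auto simp: qclass_def)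
    show "x \<in> {x. P x = 0}" using PZ[OF a, of l] xl l by (simp add: Lam_def)
  qed
  have d1: "R \<inter> Om = {}"
  proof (rule ccontr)
    assume "R \<inter> Om \<noteq> {}"
    then obtain z \<eta> where z: "Im z = 0" and e: "\<eta> \<in> Eta" and eq: "of_cplx z = omega g1 g2 \<eta>"
      by (auto simp: R_def Xi_def Om_def)
    have "Re z = Re \<eta>" "(Re z)\<^sup>2 + (Im z)\<^sup>2 = (Re \<eta>)\<^sup>2 + (Im \<eta>)\<^sup>2"
      using inv_of_cplx[of z] om_inv[of \<eta>] eq by simp_all
    then show False using z Eta_nonreal[OF e] by simp
  qed
  have d2: "R \<inter> C = {}"
  proof (rule ccontr)
    assume "R \<inter> C \<noteq> {}"
    then obtain z l where z: "Im z = 0" and l: "l \<in> Lam" and eq: "of_cplx z \<in> qclass (of_cplx l)"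
      by (auto simp: R_def Xi_def C_def)
    have "Re z = Re l" "(Re z)\<^sup>2 + (Im z)\<^sup>2 = (Re l)\<^sup>2 + (Im l)\<^sup>2"
      using inv_of_cplx[of z] C_inv[OF eq] by simp_all
    then show False using z l by (simp add: Lam_def)
  qed
  have d3: "Om \<inter> C = {}"
  proof (rule ccontr)
    assume "Om \<inter> C \<noteq> {}"
    then obtain \<eta> l where e: "\<eta> \<in> Eta" and l: "l \<in> Lam" and eq: "omega g1 g2 \<eta> \<in> qclass (of_cplx l)"
      by (auto simp: Om_def C_def)
    have "Re l = Re \<eta>" "(Re l)\<^sup>2 + (Im l)\<^sup>2 = (Re \<eta>)\<^sup>2 + (Im \<eta>)\<^sup>2"
      using om_inv[of \<eta>] C_inv[OF eq] by simp_all
    then have "\<eta> = l \<or> \<eta> = cnj l" by (rule cplx_eq_or_cnj)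
    then show False using l Eta_g[OF e] by (auto simp: Lam_def)
  qed
  have d4: "\<forall>l\<in>Lam. \<forall>m\<in>Lam. qclass (of_cplx l) \<inter> qclass (of_cplx m) \<noteq> {} \<longrightarrow> m = l \<or> m = cnj l"
  proof (intro ballI impI)
    fix l m assume "qclass (of_cplx l) \<inter> qclass (of_cplx m) \<noteq> {}"
    then obtain x where x: "x \<in> qclass (of_cplx l)" "x \<in> qclass (of_cplx m)" by blast
    have r1: "Re l = Re m" using C_inv[OF x(1)] C_inv[OF x(2)] by simp
    have r2: "(Re l)\<^sup>2 + (Im l)\<^sup>2 = (Re m)\<^sup>2 + (Im m)\<^sup>2"
      using C_inv[OF x(1)] C_inv[OF x(2)] by linarith
    show "m = l \<or> m = cnj l" using cplx_eq_or_cnj[OF r1 r2] .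
  qed
  have main: "{x. P x = 0} = R \<union> Om \<union> C
        \<and> R \<inter> Om = {} \<and> R \<inter> C = {} \<and> Om \<inter> C = {}
        \<and> (\<forall>l\<in>Lam. \<forall>m\<in>Lam. qclass (of_cplx l) \<inter> qclass (of_cplx m) \<noteq> {}
                 \<longrightarrow> m = l \<or> m = cnj l)"
    using sub1 sub2 d1 d2 d3 d4 by blast
  show ?thesis
    using main unfolding Let_def P_def gt_def Xi_def Lam_def Eta_def R_def Om_def C_def .
qed

end
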